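(* Under the hypotheses of Theorem 9 (connected $G$, non-cut edge $e=(i,j)$, $i\ne j$, $a_{ij}>0$, $v=e_i-e_j$, $\widehat A=A+a_{ij}vv^T$, $c(e)=K(D^{-1}\widehat A)-K(D^{-1}A)$), the matrix \[ S=D-A+\frac{1}{\|d\|_1}dd^T \] is symmetric positive definite, and with $x=S^{-1}v$, $\alpha=a_{ij}(x_i-x_j)$, $\beta=a_{ij}x^TDx$, one has $\alpha\neq 1$ and \[ c(e)=\frac{\beta}{1-\alpha}. \]
   Context: Graphs are undirected and possibly weighted on vertex set $\{1,\dots,n\}$, with symmetric nonnegative adjacency matrix $A=(a_{k\ell})$; $d=A\mathbf 1$ (all entries assumed positive), $D=\mathrm{diag}(d)$, $\|d\|_1=\sum_kd_k$; $e_k$ is the $k$-th column of the identity and $\mathbf 1$ the all-ones vector. For an irreducible row-stochastic matrix $Q$ with stationary vector $\pi$, the Kemeny constant is $K(Q)=\sum_j\pi_j m_{kj}$, where $m_{kj}$ is the expected first passage time from $k$ to $j$ ($m_{kk}=0$), independent of $k$; equivalently $K(Q)=\sum_{\ell=2}^n 1/(1-\lambda_\ell)$, where $1=\lambda_1,\lambda_2,\dots,\lambda_n$ are the eigenvalues of $Q$. The edge $e$ is a cut-edge if the graph obtained by deleting $e$ is disconnected. *)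

theory Defs
  imports "Jordan_Normal_Form.Gauss_Jordan_Elimination" "Jordan_Normal_Form.Char_Poly"
begin

(* Vertices are indexed 0..n-1 (JNF convention) instead of 1..n. *)

definition ones_vec :: "nat \<Rightarrow> real vec" where
  "ones_vec n = vec n (\<lambda>_. 1)"

definition degree_vec :: "real mat \<Rightarrow> real vec" where
  "degree_vec A = A *\<^sub>v ones_vec (dim_row A)"

definition diag_of :: "real vec \<Rightarrow> real mat" where
  "diag_of d = mat (dim_vec d) (dim_vec d) (\<lambda>(k,l). if k = l then d $ k else 0)"

definition outer :: "real vec \<Rightarrow> real vec \<Rightarrow> real mat" where
  "outer u w = mat (dim_vec u) (dim_vec w) (\<lambda>(k,l). u $ k * w $ l)"

definition norm1 :: "real vec \<Rightarrow> real" where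
  "norm1 d = (\<Sum>k<dim_vec d. \<bar>d $ k\<bar>)"

(* graph adjacency: k ~ l iff k <> l and a_kl > 0 (loops are irrelevant for connectivity) *)
definition adj_rel :: "real mat \<Rightarrow> nat \<Rightarrow> nat \<Rightarrow> bool" where
  "adj_rel A k l = (k < dim_row A \<and> l < dim_row A \<and> k \<noteq> l \<and> A $$ (k,l) > 0)"

definition graph_connected :: "real mat \<Rightarrow> bool" where
  "graph_connected A = (\<forall>k<dim_row A. \<forall>l<dim_row A. (adj_rel A)\<^sup>*\<^sup>* k l)"

definition delete_edge :: "real mat \<Rightarrow> nat \<Rightarrow> nat \<Rightarrow> real mat" where
  "delete_edge A i j = mat (dim_row A) (dim_col A)
     (\<lambda>(k,l). if (k = i \<and> l = j) \<or> (k = j \<and> l = i) then 0 else A $$ (k,l))"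

definition is_cut_edge :: "real mat \<Rightarrow> nat \<Rightarrow> nat \<Rightarrow> bool" where
  "is_cut_edge A i j = (\<not> graph_connected (delete_edge A i j))"

(* Kemeny constant via eigenvalues: eigenvalues (with multiplicity) are the roots of
   the characteristic polynomial over C; remove one copy of lambda_1 = 1 and sum
   1/(1 - lambda_l). *)
definition eigenvalue_list :: "real mat \<Rightarrow> complex list" where
  "eigenvalue_list Q = (SOME as. char_poly (map_mat complex_of_real Q) = (\<Prod>a\<leftarrow>as. [:- a, 1:]))"

definition kemeny :: "real mat \<Rightarrow> complex" where
  "kemeny Q = (\<Sum>z\<leftarrow>remove1 1 (eigenvalue_list Q). 1 / (1 - z))"

definition sym_pos_def :: "real mat \<Rightarrow> bool" where
  "sym_pos_def S = (S \<in> carrier_mat (dim_row S) (dim_row S) \<and> S\<^sup>T = S \<and>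
     (\<forall>x \<in> carrier_vec (dim_row S). x \<noteq> 0\<^sub>v (dim_row S) \<longrightarrow> x \<bullet> (S *\<^sub>v x) > 0))"

end

theory Submission
  imports Defs "Jordan_Normal_Form.Schur_Decomposition"
begin

declare minus_carrier_mat[simp]

definition tr :: "'a::comm_ring_1 mat \<Rightarrow> 'a" where
  "tr X = (\<Sum>k<dim_row X. X $$ (k,k))"

lemma tr_comm:
  assumes "X \<in> carrier_mat n m" "Y \<in> carrier_mat m n"
  shows "tr (X * Y) = tr (Y * X)"
proof -
  have "tr (X * Y) = (\<Sum>k<n. \<Sum>l<m. X $$ (k,l) * Y $$ (l,k))"
    using assms by (simp add: tr_def scalar_prod_def row_def col_def atLeast0LessThan)
  also have "\<dots> = (\<Sum>l<m. \<Sum>k<n. Y $$ (l,k) * X $$ (k,l))"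
    by (subst sum.swap) (simp add: mult.commute)
  also have "\<dots> = tr (Y * X)"
    using assms by (simp add: tr_def scalar_prod_def row_def col_def atLeast0LessThan)
  finally show ?thesis .
qed

lemma inv_upper_triangular_diag:
  fixes U X :: "'a::field mat"
  assumes U: "U \<in> carrier_mat n n" and X: "X \<in> carrier_mat n n"
    and ut: "upper_triangular U" and XU: "X * U = 1\<^sub>m n"
  shows "\<forall>k<n. X $$ (k,k) * U $$ (k,k) = 1"
proof -
  have "det X * det U = 1" using det_mult[OF X U] XU by simp
  hence "det U \<noteq> 0" by auto
  hence "prod_list (diag_mat U) \<noteq> 0" using det_upper_triangular[OF ut U] by simp
  hence Unz: "\<And>l. l < n \<Longrightarrow> U $$ (l,l) \<noteq> 0"
    using U by (auto simp: diag_mat_def prod_list_zero_iff)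
  have XU_entry: "\<And>k l. k < n \<Longrightarrow> l < n \<Longrightarrow> (\<Sum>m<n. X $$ (k,m) * U $$ (m,l)) = (if k = l then 1 else 0)"
  proof -
    fix k l assume "k < n" "l < n"
    have "(X * U) $$ (k,l) = (\<Sum>m<n. X $$ (k,m) * U $$ (m,l))"
      using X U \<open>k<n\<close> \<open>l<n\<close> by (simp add: scalar_prod_def row_def col_def atLeast0LessThan)
    thus "(\<Sum>m<n. X $$ (k,m) * U $$ (m,l)) = (if k = l then 1 else 0)"
      using XU \<open>k<n\<close> \<open>l<n\<close> by simp
  qed
  have low: "\<And>k l. k < n \<Longrightarrow> l < k \<Longrightarrow> X $$ (k,l) = 0"
  proof -
    fix k l assume k: "k < n" and lk: "l < k"
    show "X $$ (k,l) = 0" using lk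
    proof (induction l rule: less_induct)
      case (less l)
      have ln: "l < n" using less k by simp
      have "(\<Sum>m<n. X $$ (k,m) * U $$ (m,l)) = (\<Sum>m<n. if m = l then X $$ (k,l) * U $$ (l,l) else 0)"
      proof (rule sum.cong[OF refl])
        fix m assume "m \<in> {..<n}"
        show "X $$ (k,m) * U $$ (m,l) = (if m = l then X $$ (k,l) * U $$ (l,l) else 0)"
        proof (cases "m < l")
          case True then show ?thesis using less by auto
        next
          case False
          then show ?thesis using ut U \<open>m \<in> {..<n}\<close> by (auto simp: upper_triangular_def)
        qed
      qed
      also have "\<dots> = X $$ (k,l) * U $$ (l,l)" using ln by simp
      finally have "X $$ (k,l) * U $$ (l,l) = 0" using XU_entry[OF k ln] less by simp
      thus ?case using Unz[OF ln] by simp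
    qed
  qed
  show ?thesis
  proof (intro allI impI)
    fix k assume k: "k < n"
    have "(\<Sum>m<n. X $$ (k,m) * U $$ (m,k)) = (\<Sum>m<n. if m = k then X $$ (k,k) * U $$ (k,k) else 0)"
    proof (rule sum.cong[OF refl])
      fix m assume "m \<in> {..<n}"
      show "X $$ (k,m) * U $$ (m,k) = (if m = k then X $$ (k,k) * U $$ (k,k) else 0)"
      proof (cases "m < k")
        case True then show ?thesis using low k by auto
      next
        case False
        then show ?thesis using ut U \<open>m \<in> {..<n}\<close> by (auto simp: upper_triangular_def)
      qed
    qed
    also have "\<dots> = X $$ (k,k) * U $$ (k,k)" using k by simp
    finally show "X $$ (k,k) * U $$ (k,k) = 1" using XU_entry[OF k k] by simp
  qed
qed



lemma W_inv:
  fixes n :: nat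
  defines "E \<equiv> mat n n (\<lambda>(k,l). if l = 0 \<and> k \<noteq> 0 then 1 else (0::'a::comm_ring_1))"
  shows "(1\<^sub>m n + E) * (1\<^sub>m n - E) = 1\<^sub>m n" "(1\<^sub>m n - E) * (1\<^sub>m n + E) = 1\<^sub>m n"
proof -
  have E: "E \<in> carrier_mat n n" unfolding E_def by simp
  have EE: "E * E = 0\<^sub>m n n"
    by (rule eq_matI) (auto simp: E_def scalar_prod_def row_def col_def intro!: sum.neutral)
  have one: "1\<^sub>m n \<in> carrier_mat n n" by simp
  have "(1\<^sub>m n + E) * (1\<^sub>m n - E) = 1\<^sub>m n * (1\<^sub>m n - E) + E * (1\<^sub>m n - E)"
    using add_mult_distrib_mat[OF one E, of "1\<^sub>m n - E" n] E by simp
  also have "\<dots> = (1\<^sub>m n - E) + (E * 1\<^sub>m n - E * E)"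
    using E by (simp add: mult_minus_distrib_mat[OF E one E])
  also have "\<dots> = 1\<^sub>m n" using E EE by (auto intro!: eq_matI)
  finally show "(1\<^sub>m n + E) * (1\<^sub>m n - E) = 1\<^sub>m n" .
  have "(1\<^sub>m n - E) * (1\<^sub>m n + E) = 1\<^sub>m n * (1\<^sub>m n + E) - E * (1\<^sub>m n + E)"
    using minus_mult_distrib_mat[OF one E, of "1\<^sub>m n + E" n] E by simp
  also have "\<dots> = (1\<^sub>m n + E) - (E * 1\<^sub>m n + E * E)"
    using E by (simp add: mult_add_distrib_mat[OF E one E])
  also have "\<dots> = 1\<^sub>m n" using E EE by (auto intro!: eq_matI)
  finally show "(1\<^sub>m n - E) * (1\<^sub>m n + E) = 1\<^sub>m n" .
qed

lemma tri:
  fixes Q :: "complex mat"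
  assumes Q: "Q \<in> carrier_mat n n" and n: "0 < n"
   and Q1: "Q *\<^sub>v vec n (\<lambda>_. 1) = vec n (\<lambda>_. 1)"
   and cp: "char_poly Q = [:-1,1:] * (\<Prod>a\<leftarrow>rest. [:-a,1:])"
  shows "\<exists>V V' T. V \<in> carrier_mat n n \<and> V' \<in> carrier_mat n n \<and> T \<in> carrier_mat n n \<and>
     V * V' = 1\<^sub>m n \<and> V' * V = 1\<^sub>m n \<and> V' * Q * V = T \<and> upper_triangular T \<and>
     diag_mat T = 1 # rest \<and> col V 0 = vec n (\<lambda>_. 1)"
proof -
  define E where "E = mat n n (\<lambda>(k,l). if l = 0 \<and> k \<noteq> 0 then 1 else (0::complex))"
  define W where "W = 1\<^sub>m n + E"
  define W' where "W' = 1\<^sub>m n - E"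
  have E: "E \<in> carrier_mat n n" unfolding E_def by simp
  have W: "W \<in> carrier_mat n n" and W': "W' \<in> carrier_mat n n" unfolding W_def W'_def using E by auto
  have WW': "W * W' = 1\<^sub>m n" and W'W: "W' * W = 1\<^sub>m n"
    using W_inv[of n] unfolding W_def W'_def E_def by auto
  let ?one = "vec n (\<lambda>_. 1::complex)"
  have colW: "col W 0 = ?one"
    using n by (auto simp: W_def E_def)
  have W'one: "W' *\<^sub>v ?one = unit_vec n 0"
  proof (rule eq_vecI)
    fix k assume k: "k < dim_vec (unit_vec n (0::nat) :: complex vec)"
    hence k: "k < n" by simp
    have "(W' *\<^sub>v ?one) $ k = (\<Sum>l<n. W' $$ (k,l))"
      using W' k by (simp add: mult_mat_vec_def scalar_prod_def row_def atLeast0LessThan)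
    also have "\<dots> = (\<Sum>l<n. (if k = l then 1 else 0) - (if l = 0 \<and> k \<noteq> 0 then 1 else 0))"
      using k by (intro sum.cong) (auto simp: W'_def E_def)
    also have "\<dots> = (if k = 0 then 1 else 0)"
      using k n by (simp add: sum_subtractf)
    finally show "(W' *\<^sub>v ?one) $ k = unit_vec n 0 $ k" using k by simp
  qed (use W' in simp)
  define Q' where "Q' = W' * Q * W"
  have Q': "Q' \<in> carrier_mat n n" unfolding Q'_def using W W' Q by auto
  have colQ': "col Q' 0 = unit_vec n 0"
  proof -
    have "col Q' 0 = (W' * Q) *\<^sub>v col W 0" unfolding Q'_def
      by (rule col_mult2[OF _ W n], use W' Q in auto)
    also have "\<dots> = W' *\<^sub>v (Q *\<^sub>v ?one)" unfolding colW
      by (rule assoc_mult_mat_vec[OF W' Q], simp)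
    also have "\<dots> = unit_vec n 0" using Q1 W'one by simp
    finally show ?thesis .
  qed
  have QWQ': "Q = W * Q' * W'"
  proof -
    have "W * Q' * W' = (W * W') * Q * (W * W')"
      unfolding Q'_def using W W' Q by (simp add: assoc_mult_mat[of _ n n _ n _ n])
    also have "\<dots> = Q" using WW' Q by simp
    finally show ?thesis by simp
  qed
  have simQQ': "similar_mat_wit Q Q' W W'"
    unfolding similar_mat_wit_def Let_def using W W' Q Q' WW' W'W QWQ' by auto
  let ?n1 = "n - 1"
  obtain A1 A2 A0 A3 where splitQ': "split_block Q' 1 1 = (A1,A2,A0,A3)"
    by (cases "split_block Q' 1 1", auto)
  from Q' n have "dim_row Q' = 1 + ?n1" "dim_col Q' = 1 + ?n1" by auto
  from split_block[OF splitQ' this] have A2: "A2 \<in> carrier_mat 1 ?n1"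
    and A3: "A3 \<in> carrier_mat ?n1 ?n1"
    and Q'block: "Q' = four_block_mat A1 A2 A0 A3" by auto
  have Q'0: "\<And>k. k < n \<Longrightarrow> Q' $$ (k, 0) = (if k = 0 then 1 else 0)"
  proof -
    fix k assume k: "k < n"
    have "Q' $$ (k,0) = col Q' 0 $ k" using Q' k n by simp
    thus "Q' $$ (k, 0) = (if k = 0 then 1 else 0)" unfolding colQ' using k by simp
  qed
  have A1id: "A1 = mat 1 1 (\<lambda> _. 1)"
    using splitQ'[unfolded split_block_def Let_def] Q'0[of 0] n
    by (auto intro!: eq_matI)
  have A1: "A1 \<in> carrier_mat 1 1" unfolding A1id by auto
  have A0id: "A0 = 0\<^sub>m ?n1 1"
    using splitQ'[unfolded split_block_def Let_def] Q'0 Q' by (auto intro!: eq_matI)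
  have A0: "A0 \<in> carrier_mat ?n1 1" unfolding A0id by auto
  have "char_poly Q' = char_poly Q"
    using char_poly_similar[of Q' Q] simQQ' similar_mat_wit_sym unfolding similar_mat_def by blast
  hence cp': "char_poly Q' = [:-1,1:] * (\<Prod>a\<leftarrow>rest. [:-a,1:])" using cp by simp
  also have "char_poly Q' = char_poly A1 * char_poly A3"
    unfolding Q'block A0id
    by (rule char_poly_four_block_zeros_col[OF A1 A2 A3])
  also have "char_poly A1 = [: -1,1 :]"
    by (simp add: A1id char_poly_defs det_def sign_def)
  finally have cpA3: "char_poly A3 = (\<Prod> e \<leftarrow> rest. [:- e, 1:])"
    by (metis mult_cancel_left pCons_eq_0_iff zero_neq_one)
  obtain B P' R' where schur: "schur_decomposition A3 rest = (B,P',R')"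
    by (cases "schur_decomposition A3 rest", auto)
  from schur_decomposition[OF A3 cpA3 schur]
  have simIH: "similar_mat_wit A3 B P' R'" and ut: "upper_triangular B" and diag: "diag_mat B = rest" by auto
  from similar_mat_witD2[OF A3 simIH]
  have B: "B \<in> carrier_mat ?n1 ?n1" and P': "P' \<in> carrier_mat ?n1 ?n1" and R': "R' \<in> carrier_mat ?n1 ?n1"
    and PR': "P' * R' = 1\<^sub>m ?n1" by auto
  let ?P = "four_block_mat (1\<^sub>m 1) (0\<^sub>m 1 ?n1) (0\<^sub>m ?n1 1) P'"
  let ?R = "four_block_mat (1\<^sub>m 1) (0\<^sub>m 1 ?n1) (0\<^sub>m ?n1 1) R'"
  define T where "T = four_block_mat A1 (A2 * P') A0 B"
  have A0_eq: "A0 = P' * A0 * 1\<^sub>m 1" unfolding A0id using P' by auto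
  have simQ'T: "similar_mat_wit Q' T ?P ?R" unfolding Q'block T_def
    by (rule similar_mat_wit_four_block[OF similar_mat_wit_refl[OF A1] simIH _ A0_eq A1 A3 A0],
    insert PR' A2 P' R', auto)
  have utT: "upper_triangular T" unfolding T_def A0id
    by (intro upper_triangular_four_block[OF _ B _ ut], auto simp: A1id)
  from A1id have diagA1: "diag_mat A1 = [1]" unfolding diag_mat_def by auto
  from diag_four_block_mat[OF A1 B] have diagT: "diag_mat T = 1 # rest" unfolding diag diagA1 T_def by simp
  have sim: "similar_mat_wit Q T (W * ?P) (?R * W')"
    by (rule similar_mat_wit_trans[OF simQQ' simQ'T])
  have nn: "1 + ?n1 = n" using n by simp
  from similar_mat_witD2[OF Q sim]
  have V: "W * ?P \<in> carrier_mat n n" and V': "?R * W' \<in> carrier_mat n n" and T: "T \<in> carrier_mat n n"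
    and VV': "(W * ?P) * (?R * W') = 1\<^sub>m n" and V'V: "(?R * W') * (W * ?P) = 1\<^sub>m n"
    and QT: "Q = (W * ?P) * T * (?R * W')" by auto
  have "(?R * W') * Q * (W * ?P) = ((?R * W') * (W * ?P)) * T * ((?R * W') * (W * ?P))"
    unfolding QT using V V' T by (simp add: assoc_mult_mat[of _ n n _ n _ n])
  hence V'QV: "(?R * W') * Q * (W * ?P) = T" using V'V T by simp
  have P: "?P \<in> carrier_mat n n" using P' nn by (metis four_block_carrier_mat one_carrier_mat)
  have colP: "col ?P 0 = unit_vec n 0"
    by (rule eq_vecI, insert P' n, auto)
  have colV: "col (W * ?P) 0 = vec n (\<lambda>_. 1)"
  proof -
    have "col (W * ?P) 0 = W *\<^sub>v col ?P 0" by (rule col_mult2[OF W P n])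
    also have "\<dots> = col W 0" unfolding colP
      by (rule eq_vecI, insert W n, auto)
    finally show ?thesis using colW by simp
  qed
  show ?thesis
    by (rule exI[of _ "W * ?P"], rule exI[of _ "?R * W'"], rule exI[of _ T],
        insert V V' T VV' V'V V'QV utT diagT colV, auto)
qed

lemma kem_c:
  fixes Q N :: "complex mat" and w :: "complex vec"
  assumes Q: "Q \<in> carrier_mat n n" and n: "0 < n"
    and Q1: "Q *\<^sub>v vec n (\<lambda>_. 1) = vec n (\<lambda>_. 1)"
    and w: "w \<in> carrier_vec n" and w1: "w \<bullet> vec n (\<lambda>_. 1) = 1"
    and cp: "char_poly Q = (\<Prod>a\<leftarrow>es. [:-a,1:])"
    and N: "N \<in> carrier_mat n n"
    and NM: "N * (1\<^sub>m n - Q + mat n n (\<lambda>(k,l). w $ l)) = 1\<^sub>m n"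
  shows "(\<Sum>z\<leftarrow>remove1 1 es. 1 / (1 - z)) = tr N - 1"
proof -
  let ?one = "vec n (\<lambda>_. 1::complex)"
  have "eigenvector Q ?one 1" unfolding eigenvector_def using Q Q1 n
    by (auto simp: vec_eq_iff)
  hence "eigenvalue Q 1" unfolding eigenvalue_def by blast
  hence "poly (char_poly Q) 1 = 0" using eigenvalue_root_char_poly[OF Q] by simp
  then obtain a where a: "a \<in> set es" "poly [:-a,1:] 1 = 0"
    unfolding cp poly_prod_list_zero_iff by auto
  hence "a = 1" by simp
  with a have one_es: "1 \<in> set es" by simp
  define rest where "rest = remove1 1 es"
  have cp2: "char_poly Q = [:-1,1:] * (\<Prod>a\<leftarrow>rest. [:-a,1:])"
    unfolding cp rest_def using prod_list_map_remove1[OF one_es, of "\<lambda>a. [:-a,1:]"] by simp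
  from tri[OF Q n Q1 cp2] obtain V V' T where V: "V \<in> carrier_mat n n" and V': "V' \<in> carrier_mat n n"
    and T: "T \<in> carrier_mat n n" and VV': "V * V' = 1\<^sub>m n" and V'V: "V' * V = 1\<^sub>m n"
    and V'QV: "V' * Q * V = T" and ut: "upper_triangular T" and diagT: "diag_mat T = 1 # rest"
    and colV: "col V 0 = ?one" by blast
  have len: "length rest = n - 1" using arg_cong[OF diagT, of length] T by (simp add: diag_mat_def)
  have T00: "T $$ (0,0) = 1" using arg_cong[OF diagT, of "\<lambda>xs. xs ! 0"] T n by (simp add: diag_mat_def)
  have Tkk: "\<And>k. k < n - 1 \<Longrightarrow> T $$ (Suc k, Suc k) = rest ! k"
    using diagT T by (simp add: diag_mat_def list_eq_iff_nth_eq)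
  define J where "J = mat n n (\<lambda>(k,l). w $ l)"
  have J: "J \<in> carrier_mat n n" unfolding J_def by simp
  have V'one: "V' *\<^sub>v ?one = unit_vec n 0"
  proof -
    have "V *\<^sub>v unit_vec n 0 = col V 0"
      by (rule eq_vecI, insert V n, auto)
    hence "V' *\<^sub>v ?one = V' *\<^sub>v (V *\<^sub>v unit_vec n 0)" using colV by simp
    also have "\<dots> = (V' * V) *\<^sub>v unit_vec n 0"
      by (rule assoc_mult_mat_vec[symmetric, OF V' V], simp)
    finally show ?thesis using V'V by simp
  qed
  have rowsum: "\<And>k. k < n \<Longrightarrow> (\<Sum>m<n. V' $$ (k,m)) = (if k = 0 then 1 else 0)"
  proof -
    fix k assume k: "k < n"
    have "(V' *\<^sub>v ?one) $ k = (\<Sum>m<n. V' $$ (k,m))"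
      using V' k by (simp add: mult_mat_vec_def scalar_prod_def row_def atLeast0LessThan)
    thus "(\<Sum>m<n. V' $$ (k,m)) = (if k = 0 then 1 else 0)" unfolding V'one using k by simp
  qed
  have V'J: "V' * J = mat n n (\<lambda>(k,l). if k = 0 then w $ l else 0)"
  proof (rule eq_matI)
    fix k l assume k: "k < dim_row (mat n n (\<lambda>(k,l). if k = 0 then w $ l else 0))"
      and l: "l < dim_col (mat n n (\<lambda>(k,l). if k = 0 then w $ l else 0))"
    hence k: "k < n" and l: "l < n" by auto
    have "(V' * J) $$ (k,l) = (\<Sum>m<n. V' $$ (k,m) * w $ l)"
      using V' J k l by (simp add: scalar_prod_def row_def col_def atLeast0LessThan J_def)
    also have "\<dots> = (\<Sum>m<n. V' $$ (k,m)) * w $ l" by (simp add: sum_distrib_right)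
    finally show "(V' * J) $$ (k,l) = mat n n (\<lambda>(k,l). if k = 0 then w $ l else 0) $$ (k,l)"
      using rowsum[OF k] k l by simp
  qed (use V' J in auto)
  define U where "U = V' * (1\<^sub>m n - Q + J) * V"
  have U: "U \<in> carrier_mat n n" unfolding U_def using V V' Q J by auto
  have Ueq: "U = 1\<^sub>m n - T + V' * J * V"
  proof -
    have "V' * (1\<^sub>m n - Q + J) = V' * (1\<^sub>m n - Q) + V' * J"
      by (rule mult_add_distrib_mat[OF V'], use Q J in auto)
    also have "V' * (1\<^sub>m n - Q) = V' * 1\<^sub>m n - V' * Q"
      by (rule mult_minus_distrib_mat[OF V'], use Q in auto)
    finally have "V' * (1\<^sub>m n - Q + J) = V' - V' * Q + V' * J" using V' by simp
    hence "U = (V' - V' * Q + V' * J) * V" unfolding U_def by simp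
    also have "\<dots> = V' * V - V' * Q * V + V' * J * V"
      using V' Q J V by (simp add: add_mult_distrib_mat[of _ n n] minus_mult_distrib_mat[of _ n n])
    finally show ?thesis using V'V V'QV by simp
  qed
  have Uentry: "\<And>k l. k < n \<Longrightarrow> l < n \<Longrightarrow> U $$ (k,l) =
      (if k = l then 1 else 0) - T $$ (k,l) + (if k = 0 then w \<bullet> col V l else 0)"
  proof -
    fix k l assume k: "k < n" and l: "l < n"
    have "(V' * J * V) $$ (k,l) = row (V' * J) k \<bullet> col V l"
      by (rule index_mult_mat(1), use V V' J k l in auto)
    also have "row (V' * J) k = (if k = 0 then w else 0\<^sub>v n)"
      unfolding V'J using k w by (auto simp: vec_eq_iff)
    finally have "(V' * J * V) $$ (k,l) = (if k = 0 then w \<bullet> col V l else 0)"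
      using V l by auto
    thus "U $$ (k,l) = (if k = l then 1 else 0) - T $$ (k,l) + (if k = 0 then w \<bullet> col V l else 0)"
      unfolding Ueq using k l T V V' J by simp
  qed
  have utU: "upper_triangular U"
    using Uentry ut T U by (auto simp: upper_triangular_def)
  have U00: "U $$ (0,0) = 1" using Uentry[OF n n] T00 colV w1 by simp
  have Ukk: "\<And>k. k < n - 1 \<Longrightarrow> U $$ (Suc k, Suc k) = 1 - rest ! k"
    using Uentry Tkk by simp
  define X where "X = V' * N * V"
  have X: "X \<in> carrier_mat n n" unfolding X_def using V V' N by auto
  have XU: "X * U = 1\<^sub>m n"
  proof -
    define M where "M = 1\<^sub>m n - Q + J"
    have M: "M \<in> carrier_mat n n" unfolding M_def using Q J by simp
    have NV: "N * V \<in> carrier_mat n n" using N V by simp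
    have MV: "M * V \<in> carrier_mat n n" using M V by simp
    have V'MV: "V' * (M * V) \<in> carrier_mat n n" using V' MV by simp
    have VV'MV: "V * (V' * (M * V)) \<in> carrier_mat n n" using V V'MV by simp
    have NM': "N * M = 1\<^sub>m n" using NM unfolding M_def J_def .
    have e1: "X * U = (V' * (N * V)) * (V' * (M * V))"
      unfolding X_def U_def M_def[symmetric]
      using assoc_mult_mat[OF V' N V] assoc_mult_mat[OF V' M V] by simp
    have e2: "(V' * (N * V)) * (V' * (M * V)) = V' * (N * (V * (V' * (M * V))))"
      using assoc_mult_mat[OF V' NV V'MV] assoc_mult_mat[OF N V V'MV] by simp
    have e3: "V * (V' * (M * V)) = M * V"
      using assoc_mult_mat[OF V V' MV, symmetric] VV' left_mult_one_mat[OF MV] by simp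
    have e4: "N * (M * V) = V" using assoc_mult_mat[OF N M V, symmetric] NM' left_mult_one_mat[OF V] by simp
    show ?thesis using e1 e2 e3 e4 V'V by simp
  qed
  have Xdiag: "\<And>k. k < n \<Longrightarrow> X $$ (k,k) = 1 / U $$ (k,k)"
    using inv_upper_triangular_diag[OF U X utU XU] by (metis divide_self_if mult_eq_0_iff nonzero_eq_divide_eq one_neq_zero)
  have NV: "N * V \<in> carrier_mat n n" using N V by simp
  have "tr X = tr (V' * (N * V))" unfolding X_def using assoc_mult_mat[OF V' N V] by simp
  also have "\<dots> = tr ((N * V) * V')" by (rule tr_comm[OF V' NV])
  also have "(N * V) * V' = N" using assoc_mult_mat[OF N V V'] VV' right_mult_one_mat[OF N] by simp
  finally have trX: "tr X = tr N" .
  have "tr X = (\<Sum>k<n. 1 / U $$ (k,k))" unfolding tr_def using X Xdiag by simp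
  also have "\<dots> = (\<Sum>k<Suc (n-1). 1 / U $$ (k,k))" using n by simp
  also have "\<dots> = 1 + (\<Sum>k<n-1. 1 / (1 - rest ! k))"
    by (subst sum.lessThan_Suc_shift) (simp add: U00 Ukk)
  also have "(\<Sum>k<n-1. 1 / (1 - rest ! k)) = (\<Sum>z\<leftarrow>rest. 1 / (1 - z))"
    by (simp add: sum_list_sum_nth len atLeast0LessThan)
  finally show ?thesis using trX unfolding rest_def by simp
qed

lemma diag_of_carrier[simp]: "diag_of u \<in> carrier_mat (dim_vec u) (dim_vec u)"
  unfolding diag_of_def by simp

lemma diag_of_dims[simp]: "dim_row (diag_of u) = dim_vec u" "dim_col (diag_of u) = dim_vec u"
  unfolding diag_of_def by simp_all

lemma diag_of_index[simp]: "k < dim_vec u \<Longrightarrow> l < dim_vec u \<Longrightarrow> diag_of u $$ (k,l) = (if k = l then u $ k else 0)"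
  unfolding diag_of_def by simp

lemma outer_carrier[simp]: "outer u w \<in> carrier_mat (dim_vec u) (dim_vec w)"
  unfolding outer_def by simp

lemma outer_dims[simp]: "dim_row (outer u w) = dim_vec u" "dim_col (outer u w) = dim_vec w"
  unfolding outer_def by simp_all

lemma outer_index[simp]: "k < dim_vec u \<Longrightarrow> l < dim_vec w \<Longrightarrow> outer u w $$ (k,l) = u $ k * w $ l"
  unfolding outer_def by simp

lemma diag_mult_index:
  assumes X: "X \<in> carrier_mat (dim_vec u) m" and k: "k < dim_vec u" and l: "l < m"
  shows "(diag_of u * X) $$ (k,l) = u $ k * X $$ (k,l)"
proof -
  have "(diag_of u * X) $$ (k,l) = (\<Sum>r<dim_vec u. diag_of u $$ (k,r) * X $$ (r,l))"
    using X k l by (simp add: scalar_prod_def row_def col_def atLeast0LessThan)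
  also have "\<dots> = (\<Sum>r<dim_vec u. if r = k then u $ k * X $$ (k,l) else 0)"
    by (rule sum.cong, auto simp: k)
  finally show ?thesis using k by simp
qed

lemma mult_diag_index:
  assumes X: "X \<in> carrier_mat m (dim_vec u)" and k: "k < m" and l: "l < dim_vec u"
  shows "(X * diag_of u) $$ (k,l) = X $$ (k,l) * u $ l"
proof -
  have "(X * diag_of u) $$ (k,l) = (\<Sum>r<dim_vec u. X $$ (k,r) * diag_of u $$ (r,l))"
    using X k l by (simp add: scalar_prod_def row_def col_def atLeast0LessThan)
  also have "\<dots> = (\<Sum>r<dim_vec u. if r = l then X $$ (k,l) * u $ l else 0)"
    by (rule sum.cong, auto simp: l)
  finally show ?thesis using l by simp
qed

lemma tr_mult_diag:
  assumes X: "X \<in> carrier_mat n n" and u: "dim_vec u = n"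
  shows "tr (X * diag_of u) = (\<Sum>k<n. X $$ (k,k) * u $ k)"
proof -
  have "tr (X * diag_of u) = (\<Sum>k<n. (X * diag_of u) $$ (k,k))" unfolding tr_def using X by simp
  also have "\<dots> = (\<Sum>k<n. X $$ (k,k) * u $ k)"
    by (rule sum.cong[OF refl], rule mult_diag_index, use X u in auto)
  finally show ?thesis .
qed

lemma norm1_pos_sum:
  assumes "\<forall>k<dim_vec d. d $ k > 0"
  shows "norm1 d = (\<Sum>k<dim_vec d. d $ k)"
  unfolding norm1_def using assms by (intro sum.cong) auto

lemma kem_real:
  fixes B Tinv :: "real mat" and d :: "real vec"
  assumes B: "B \<in> carrier_mat n n" and n: "0 < n" and d: "dim_vec d = n"
    and dpos: "\<forall>k<n. d $ k > 0"
    and rows: "\<forall>k<n. (\<Sum>l<n. B $$ (k,l)) = d $ k"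
    and Tinv: "Tinv \<in> carrier_mat n n"
    and TT: "Tinv * (diag_of d - B + (1 / norm1 d) \<cdot>\<^sub>m outer d d) = 1\<^sub>m n"
  shows "kemeny (diag_of (map_vec inverse d) * B) = complex_of_real (tr (Tinv * diag_of d) - 1)"
proof -
  let ?D = "diag_of d" and ?Di = "diag_of (map_vec inverse d)"
  define T where "T = diag_of d - B + (1 / norm1 d) \<cdot>\<^sub>m outer d d"
  define Qr where "Qr = ?Di * B"
  have D: "?D \<in> carrier_mat n n" using d by (metis diag_of_carrier)
  have Di: "?Di \<in> carrier_mat n n" using d by (metis diag_of_carrier index_map_vec(2))
  have T: "T \<in> carrier_mat n n" unfolding T_def using d B by auto
  have Qr: "Qr \<in> carrier_mat n n" unfolding Qr_def using Di B by simp
  have Qr_idx: "\<And>k l. k < n \<Longrightarrow> l < n \<Longrightarrow> Qr $$ (k,l) = B $$ (k,l) / d $ k"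
    unfolding Qr_def using B d by (subst diag_mult_index) (auto simp: divide_inverse)
  have nd: "norm1 d = (\<Sum>k<n. d $ k)" using norm1_pos_sum[of d] dpos d by simp
  have ndpos: "norm1 d > 0" unfolding nd using n dpos by (intro sum_pos) auto
  define Jr where "Jr = mat n n (\<lambda>(k,l). d $ l / norm1 d)"
  have DiT: "?Di * T = 1\<^sub>m n - Qr + Jr"
  proof (rule eq_matI)
    fix k l assume k: "k < dim_row (1\<^sub>m n - Qr + Jr)" and l: "l < dim_col (1\<^sub>m n - Qr + Jr)"
    hence k: "k < n" and l: "l < n" by (auto simp: Jr_def)
    have "(?Di * T) $$ (k,l) = inverse (d $ k) * T $$ (k,l)"
      using T d k l by (subst diag_mult_index) auto
    also have "\<dots> = (1\<^sub>m n - Qr + Jr) $$ (k,l)"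
      using k l d B Qr dpos unfolding T_def Jr_def
      by (auto simp: Qr_idx field_simps)
    finally show "(?Di * T) $$ (k,l) = (1\<^sub>m n - Qr + Jr) $$ (k,l)" .
  qed (use Di T Qr in \<open>auto simp: Jr_def\<close>)
  have DDi: "?D * ?Di = 1\<^sub>m n"
  proof (rule eq_matI)
    fix k l assume "k < dim_row (1\<^sub>m n :: real mat)" "l < dim_col (1\<^sub>m n :: real mat)"
    hence k: "k < n" and l: "l < n" by auto
    show "(?D * ?Di) $$ (k,l) = 1\<^sub>m n $$ (k,l)"
      using k l d dpos Di by (subst diag_mult_index) auto
  qed (use D Di in auto)
  define Nr where "Nr = Tinv * ?D"
  have Nr: "Nr \<in> carrier_mat n n" unfolding Nr_def using Tinv D by simp
  have NM: "Nr * (1\<^sub>m n - Qr + Jr) = 1\<^sub>m n"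
  proof -
    have "Nr * (1\<^sub>m n - Qr + Jr) = Tinv * (?D * (?Di * T))"
      unfolding Nr_def DiT[symmetric] using assoc_mult_mat[OF Tinv D, of "?Di * T" n] Di T by simp
    also have "?D * (?Di * T) = T" using assoc_mult_mat[OF D Di T, symmetric] DDi left_mult_one_mat[OF T] by simp
    finally show ?thesis using TT T_def by simp
  qed
  let ?c = "map_mat complex_of_real"
  define Q where "Q = ?c Qr"
  have Q: "Q \<in> carrier_mat n n" unfolding Q_def using Qr by simp
  have "\<exists>as. char_poly Q = (\<Prod>a\<leftarrow>as. [:- a, 1:])" using char_poly_factorized[OF Q] by blast
  hence cp: "char_poly Q = (\<Prod>a\<leftarrow>eigenvalue_list Qr. [:- a, 1:])"
    unfolding eigenvalue_list_def Q_def by (rule someI_ex)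
  have Q1: "Q *\<^sub>v vec n (\<lambda>_. 1) = vec n (\<lambda>_. 1)"
  proof (rule eq_vecI)
    fix k assume "k < dim_vec (vec n (\<lambda>_. 1::complex))"
    hence k: "k < n" by simp
    have "(Q *\<^sub>v vec n (\<lambda>_. 1)) $ k = (\<Sum>l<n. complex_of_real (B $$ (k,l) / d $ k))"
      using Q Qr k by (simp add: Q_def Qr_idx mult_mat_vec_def scalar_prod_def row_def atLeast0LessThan)
    also have "\<dots> = complex_of_real ((\<Sum>l<n. B $$ (k,l)) / d $ k)"
      by (simp add: sum_divide_distrib)
    also have "\<dots> = 1" using rows dpos k by (metis divide_self less_irrefl of_real_1)
    finally show "(Q *\<^sub>v vec n (\<lambda>_. 1)) $ k = vec n (\<lambda>_. 1) $ k" using k by simp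
  qed (use Q in simp)
  define w where "w = vec n (\<lambda>l. complex_of_real (d $ l / norm1 d))"
  have w: "w \<in> carrier_vec n" unfolding w_def by simp
  have w1: "w \<bullet> vec n (\<lambda>_. 1) = 1"
  proof -
    have "w \<bullet> vec n (\<lambda>_. 1) = complex_of_real ((\<Sum>l<n. d $ l) / norm1 d)"
      unfolding w_def by (simp add: scalar_prod_def atLeast0LessThan sum_divide_distrib)
    thus ?thesis using nd ndpos by simp
  qed
  define N where "N = ?c Nr"
  have N: "N \<in> carrier_mat n n" unfolding N_def using Nr by simp
  have cM: "?c (1\<^sub>m n - Qr + Jr) = 1\<^sub>m n - Q + mat n n (\<lambda>(k,l). w $ l)"
    by (rule eq_matI, insert Qr, auto simp: Q_def Jr_def w_def)
  have NM': "N * (1\<^sub>m n - Q + mat n n (\<lambda>(k,l). w $ l)) = 1\<^sub>m n"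
  proof -
    have "?c (Nr * (1\<^sub>m n - Qr + Jr)) = N * ?c (1\<^sub>m n - Qr + Jr)"
      unfolding N_def by (rule of_real_hom.mat_hom_mult[OF Nr], insert Qr, auto simp: Jr_def)
    thus ?thesis using NM cM by (simp add: of_real_hom.mat_hom_one)
  qed
  have trN: "tr N = complex_of_real (tr Nr)"
    unfolding tr_def N_def using Nr by simp
  from kem_c[OF Q n Q1 w w1 cp N NM']
  show ?thesis unfolding kemeny_def trN Nr_def Qr_def by simp
qed


lemma quad_ident:
  fixes b :: "nat \<Rightarrow> nat \<Rightarrow> real"
  assumes sym: "\<forall>k<n. \<forall>l<n. b k l = b l k"
  shows "(\<Sum>k<n. \<Sum>l<n. b k l * (y k - y l)^2) =
         2 * ((\<Sum>k<n. (\<Sum>l<n. b k l) * (y k)^2) - (\<Sum>k<n. \<Sum>l<n. b k l * y k * y l))"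
proof -
  have sw: "(\<Sum>k<n. \<Sum>l<n. b k l * (y l)^2) = (\<Sum>k<n. (\<Sum>l<n. b k l) * (y k)^2)"
  proof -
    have "(\<Sum>k<n. \<Sum>l<n. b k l * (y l)^2) = (\<Sum>l<n. \<Sum>k<n. b k l * (y l)^2)" by (rule sum.swap)
    also have "\<dots> = (\<Sum>l<n. \<Sum>k<n. b l k * (y l)^2)"
      using sym by (intro sum.cong refl) auto
    also have "\<dots> = (\<Sum>l<n. (\<Sum>k<n. b l k) * (y l)^2)" by (simp add: sum_distrib_right)
    finally show ?thesis .
  qed
  have "(\<Sum>k<n. \<Sum>l<n. b k l * (y k - y l)^2) =
        (\<Sum>k<n. \<Sum>l<n. b k l * (y k)^2 + b k l * (y l)^2 - 2 * (b k l * y k * y l))"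
    by (intro sum.cong refl) (simp add: power2_eq_square algebra_simps)
  also have "\<dots> = (\<Sum>k<n. \<Sum>l<n. b k l * (y k)^2) + (\<Sum>k<n. \<Sum>l<n. b k l * (y l)^2)
       - 2 * (\<Sum>k<n. \<Sum>l<n. b k l * y k * y l)"
    by (simp add: sum.distrib sum_subtractf sum_distrib_left)
  also have "(\<Sum>k<n. \<Sum>l<n. b k l * (y k)^2) = (\<Sum>k<n. (\<Sum>l<n. b k l) * (y k)^2)"
    by (simp add: sum_distrib_right)
  finally show ?thesis unfolding sw by simp
qed

lemma quad_form:
  fixes B :: "real mat" and d x :: "real vec" and c :: real
  assumes B: "B \<in> carrier_mat n n" and Bsym: "B\<^sup>T = B" and d: "dim_vec d = n"
    and rows: "\<forall>k<n. (\<Sum>l<n. B $$ (k,l)) = d $ k"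
    and x: "x \<in> carrier_vec n"
  shows "x \<bullet> ((diag_of d - B + c \<cdot>\<^sub>m outer d d) *\<^sub>v x) =
     (\<Sum>k<n. \<Sum>l<n. B $$ (k,l) * (x $ k - x $ l)^2) / 2 + c * (\<Sum>k<n. d $ k * x $ k)^2"
proof -
  define S where "S = diag_of d - B + c \<cdot>\<^sub>m outer d d"
  have S: "S \<in> carrier_mat n n" unfolding S_def using B d by auto
  have Sidx: "\<And>k l. k < n \<Longrightarrow> l < n \<Longrightarrow> S $$ (k,l) = (if k = l then d $ k else 0) - B $$ (k,l) + c * (d $ k * d $ l)"
    unfolding S_def using B d by auto
  have symB: "\<forall>k<n. \<forall>l<n. B $$ (k,l) = B $$ (l,k)"
    using Bsym B by (metis carrier_matD index_transpose_mat(1))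
  have dd: "(\<Sum>k<n. \<Sum>l<n. c * ((d $ k * x $ k) * (d $ l * x $ l))) = c * (\<Sum>k<n. d $ k * x $ k)^2"
  proof -
    define a where "a k = d $ k * x $ k" for k
    have "c * ((\<Sum>k<n. a k) * (\<Sum>l<n. a l)) = c * (\<Sum>k<n. a k * (\<Sum>l<n. a l))"
      by (simp only: sum_distrib_right)
    also have "\<dots> = (\<Sum>k<n. \<Sum>l<n. c * (a k * a l))"
      by (simp only: sum_distrib_left)
    finally show ?thesis unfolding a_def power2_eq_square by simp
  qed
  have "x \<bullet> (S *\<^sub>v x) = (\<Sum>k<n. \<Sum>l<n. x $ k * (S $$ (k,l) * x $ l))"
    using S x by (simp add: scalar_prod_def mult_mat_vec_def row_def atLeast0LessThan sum_distrib_left mult.commute)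
  also have "\<dots> = (\<Sum>k<n. \<Sum>l<n. (if k = l then d $ k * (x $ k)^2 else 0) - B $$ (k,l) * x $ k * x $ l
        + c * ((d $ k * x $ k) * (d $ l * x $ l)))"
    by (intro sum.cong refl) (auto simp: Sidx power2_eq_square algebra_simps)
  also have "\<dots> = (\<Sum>k<n. d $ k * (x $ k)^2) - (\<Sum>k<n. \<Sum>l<n. B $$ (k,l) * x $ k * x $ l)
        + c * (\<Sum>k<n. d $ k * x $ k)^2"
    using dd by (simp add: sum.distrib sum_subtractf)
  also have "(\<Sum>k<n. d $ k * (x $ k)^2) = (\<Sum>k<n. (\<Sum>l<n. B $$ (k,l)) * (x $ k)^2)"
    using rows by simp
  finally show ?thesis unfolding S_def[symmetric] using quad_ident[OF symB, of "\<lambda>k. x $ k"] by simp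
qed


lemma conn_const:
  fixes E :: "real mat" and x :: "real vec"
  assumes E: "dim_row E = n" and Econn: "graph_connected E"
    and zero: "\<forall>k<n. \<forall>l<n. E $$ (k,l) * (x $ k - x $ l)^2 = 0"
    and n: "0 < n"
  shows "\<forall>k<n. x $ k = x $ 0"
proof (intro allI impI)
  fix k assume k: "k < n"
  have "(adj_rel E)\<^sup>*\<^sup>* 0 k" using Econn n k E unfolding graph_connected_def by auto
  thus "x $ k = x $ 0"
  proof (induction rule: rtranclp_induct)
    case base then show ?case by simp
  next
    case (step l m)
    from step(2) have l: "l < n" and m: "m < n" and pos: "E $$ (l,m) > 0"
      unfolding adj_rel_def using E by auto
    have "E $$ (l,m) * (x $ l - x $ m)^2 = 0" using zero l m by auto
    hence "x $ l = x $ m" using pos by simp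
    thus ?case using step(3) by simp
  qed
qed

lemma pd_gen:
  fixes B E :: "real mat" and d :: "real vec"
  assumes B: "B \<in> carrier_mat n n" and Bsym: "B\<^sup>T = B" and d: "dim_vec d = n"
    and n: "0 < n"
    and dpos: "\<forall>k<n. d $ k > 0" and rows: "\<forall>k<n. (\<Sum>l<n. B $$ (k,l)) = d $ k"
    and E: "dim_row E = n" and Enn: "\<forall>k<n. \<forall>l<n. E $$ (k,l) \<ge> 0" and Econn: "graph_connected E"
    and BE: "\<forall>k<n. \<forall>l<n. k \<noteq> l \<longrightarrow> B $$ (k,l) = E $$ (k,l)"
  shows "sym_pos_def (diag_of d - B + (1 / norm1 d) \<cdot>\<^sub>m outer d d)"
proof -
  define S where "S = diag_of d - B + (1 / norm1 d) \<cdot>\<^sub>m outer d d"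
  have S: "S \<in> carrier_mat n n" unfolding S_def using B d by auto
  have symB: "\<And>k l. k < n \<Longrightarrow> l < n \<Longrightarrow> B $$ (k,l) = B $$ (l,k)"
    using Bsym B by (metis carrier_matD index_transpose_mat(1))
  have ST: "S\<^sup>T = S"
  proof (rule eq_matI)
    fix k l assume "k < dim_row S" "l < dim_col S"
    hence k: "k < n" and l: "l < n" using S by auto
    show "S\<^sup>T $$ (k,l) = S $$ (k,l)"
      using k l S B d symB[OF k l] unfolding S_def by simp
  qed (use S in auto)
  have nd: "norm1 d = (\<Sum>k<n. d $ k)" using norm1_pos_sum[of d] dpos d by simp
  have ndpos: "norm1 d > 0" unfolding nd using n dpos by (intro sum_pos) auto
  have pos: "x \<bullet> (S *\<^sub>v x) > 0" if x: "x \<in> carrier_vec n" and x0: "x \<noteq> 0\<^sub>v n" for x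
  proof (rule ccontr)
    assume "\<not> x \<bullet> (S *\<^sub>v x) > 0"
    hence le: "x \<bullet> (S *\<^sub>v x) \<le> 0" by simp
    have termeq: "\<And>k l. k < n \<Longrightarrow> l < n \<Longrightarrow> B $$ (k,l) * (x $ k - x $ l)^2 = E $$ (k,l) * (x $ k - x $ l)^2"
      by (case_tac "k = l") (use BE in auto)
    have tnn: "\<And>k l. k < n \<Longrightarrow> l < n \<Longrightarrow> E $$ (k,l) * (x $ k - x $ l)^2 \<ge> 0"
      using Enn by simp
    have qf: "x \<bullet> (S *\<^sub>v x) = (\<Sum>k<n. \<Sum>l<n. E $$ (k,l) * (x $ k - x $ l)^2) / 2 + (1 / norm1 d) * (\<Sum>k<n. d $ k * x $ k)^2"
    proof -
      have "(\<Sum>k<n. \<Sum>l<n. B $$ (k,l) * (x $ k - x $ l)^2) = (\<Sum>k<n. \<Sum>l<n. E $$ (k,l) * (x $ k - x $ l)^2)"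
        by (rule sum.cong[OF refl], rule sum.cong[OF refl], simp add: termeq)
      thus ?thesis unfolding S_def quad_form[OF B Bsym d rows x] by simp
    qed
    have s1: "(\<Sum>k<n. \<Sum>l<n. E $$ (k,l) * (x $ k - x $ l)^2) \<ge> 0"
      using tnn by (intro sum_nonneg) auto
    have s2: "(1 / norm1 d) * (\<Sum>k<n. d $ k * x $ k)^2 \<ge> 0" using ndpos by simp
    have z1: "(\<Sum>k<n. \<Sum>l<n. E $$ (k,l) * (x $ k - x $ l)^2) = 0" using le qf s1 s2 by linarith
    have "(1 / norm1 d) * (\<Sum>k<n. d $ k * x $ k)^2 = 0" using le qf s1 s2 by linarith
    hence z2: "(\<Sum>k<n. d $ k * x $ k) = 0" using ndpos by simp
    have inner_nn: "\<And>k. k\<in>{..<n} \<Longrightarrow> 0 \<le> (\<Sum>l<n. E $$ (k,l) * (x $ k - x $ l)^2)"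
      using tnn by (auto intro: sum_nonneg)
    have z3: "\<forall>k\<in>{..<n}. (\<Sum>l<n. E $$ (k,l) * (x $ k - x $ l)^2) = 0"
      using sum_nonneg_eq_0_iff[OF finite_lessThan inner_nn] z1 by simp
    have "\<forall>k<n. \<forall>l<n. E $$ (k,l) * (x $ k - x $ l)^2 = 0"
    proof (intro allI impI)
      fix k l assume k: "k < n" and l: "l < n"
      have nn: "\<And>l. l\<in>{..<n} \<Longrightarrow> 0 \<le> E $$ (k,l) * (x $ k - x $ l)^2" using tnn k by auto
      have "(\<Sum>l<n. E $$ (k,l) * (x $ k - x $ l)^2) = 0" using z3 k by auto
      thus "E $$ (k,l) * (x $ k - x $ l)^2 = 0"
        using sum_nonneg_eq_0_iff[OF finite_lessThan nn] l by simp
    qed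
    from conn_const[OF E Econn this n] have cst: "\<forall>k<n. x $ k = x $ 0" .
    have "(\<Sum>k<n. d $ k * x $ k) = (\<Sum>k<n. d $ k * x $ 0)"
      by (rule sum.cong[OF refl]) (metis cst lessThan_iff)
    also have "\<dots> = (\<Sum>k<n. d $ k) * x $ 0" by (simp add: sum_distrib_right)
    finally have "x $ 0 = 0" using z2 nd ndpos by simp
    hence "\<And>k. k < n \<Longrightarrow> x $ k = 0" using cst by metis
    hence "x = 0\<^sub>v n" using x by (intro eq_vecI) auto
    with x0 show False by simp
  qed
  show ?thesis unfolding sym_pos_def_def S_def[symmetric] using S ST pos by auto
qed


lemma double_sum_prod:
  fixes f :: "nat \<Rightarrow> real"
  shows "(\<Sum>k<n. \<Sum>l<n. c * (f k * f l)) = c * ((\<Sum>k<n. f k) * (\<Sum>l<n. f l))"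
proof -
  have "c * ((\<Sum>k<n. f k) * (\<Sum>l<n. f l)) = c * (\<Sum>k<n. f k * (\<Sum>l<n. f l))"
    by (simp only: sum_distrib_right)
  also have "\<dots> = (\<Sum>k<n. \<Sum>l<n. c * (f k * f l))"
    by (simp only: sum_distrib_left)
  finally show ?thesis by simp
qed

lemma bil:
  fixes M :: "real mat" and x y :: "real vec"
  assumes M: "M \<in> carrier_mat n n" and x: "x \<in> carrier_vec n" and y: "y \<in> carrier_vec n"
  shows "x \<bullet> (M *\<^sub>v y) = (\<Sum>k<n. \<Sum>l<n. x $ k * M $$ (k,l) * y $ l)"
  using M x y by (simp add: scalar_prod_def mult_mat_vec_def row_def atLeast0LessThan sum_distrib_left mult.assoc)

theorem mainTheorem8:
  fixes A :: "real mat" and n i j :: nat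
  assumes A_carrier: "A \<in> carrier_mat n n"
    and A_sym: "A\<^sup>T = A"
    and A_nonneg: "\<forall>k<n. \<forall>l<n. A $$ (k,l) \<ge> 0"
    and d_pos: "\<forall>k<n. degree_vec A $ k > 0"
    and conn: "graph_connected A"
    and ij: "i < n" "j < n" "i \<noteq> j"
    and aij_pos: "A $$ (i,j) > 0"
    and noncut: "\<not> is_cut_edge A i j"
  shows
    "let d = degree_vec A; D = diag_of d; Dinv = diag_of (map_vec inverse d);
         v = unit_vec n i - unit_vec n j;
         Ahat = A + A $$ (i,j) \<cdot>\<^sub>m outer v v;
         c = kemeny (Dinv * Ahat) - kemeny (Dinv * A);
         S = D - A + (1 / norm1 d) \<cdot>\<^sub>m outer d d;
         x = the (mat_inverse S) *\<^sub>v v;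
         \<alpha> = A $$ (i,j) * (x $ i - x $ j);
         \<beta> = A $$ (i,j) * (x \<bullet> (D *\<^sub>v x))
     in sym_pos_def S \<and> \<alpha> \<noteq> 1 \<and> c = complex_of_real (\<beta> / (1 - \<alpha>))"
proof -
  define d where "d = degree_vec A"
  define D where "D = diag_of d"
  define Dinv where "Dinv = diag_of (map_vec inverse d)"
  define v where "v = unit_vec n i - (unit_vec n j :: real vec)"
  define a where "a = A $$ (i,j)"
  define Ahat where "Ahat = A + a \<cdot>\<^sub>m outer v v"
  define S where "S = D - A + (1 / norm1 d) \<cdot>\<^sub>m outer d d"
  define Sh where "Sh = D - Ahat + (1 / norm1 d) \<cdot>\<^sub>m outer d d"
  define x where "x = the (mat_inverse S) *\<^sub>v v"
  define \<alpha> where "\<alpha> = a * (x $ i - x $ j)"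
  define \<beta> where "\<beta> = a * (x \<bullet> (D *\<^sub>v x))"
  have n: "0 < n" using ij by simp
  have A: "A \<in> carrier_mat n n" by fact
  have dA: "dim_vec d = n" unfolding d_def degree_vec_def using A by simp
  have d_idx: "\<And>k. k < n \<Longrightarrow> d $ k = (\<Sum>l<n. A $$ (k,l))"
    unfolding d_def degree_vec_def ones_vec_def using A
    by (simp add: mult_mat_vec_def scalar_prod_def row_def atLeast0LessThan)
  have rowsA: "\<forall>k<n. (\<Sum>l<n. A $$ (k,l)) = d $ k" using d_idx by simp
  have dpos: "\<forall>k<n. d $ k > 0" using d_pos unfolding d_def by simp
  have v: "v \<in> carrier_vec n" unfolding v_def by simp
  have v_idx: "\<And>k. k < n \<Longrightarrow> v $ k = (if k = i then 1 else 0) - (if k = j then 1 else 0)"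
    unfolding v_def using ij by simp
  have vsum: "(\<Sum>l<n. v $ l) = 0"
    using ij by (simp add: v_idx sum_subtractf)
  have symA: "\<And>k l. k < n \<Longrightarrow> l < n \<Longrightarrow> A $$ (k,l) = A $$ (l,k)"
    using A_sym A by (metis carrier_matD index_transpose_mat(1))
  have Ahat: "Ahat \<in> carrier_mat n n" unfolding Ahat_def using A v by auto
  have Ahat_idx: "\<And>k l. k < n \<Longrightarrow> l < n \<Longrightarrow> Ahat $$ (k,l) = A $$ (k,l) + a * (v $ k * v $ l)"
    unfolding Ahat_def using A v by simp
  have Ahat_sym: "Ahat\<^sup>T = Ahat"
    by (rule eq_matI, insert Ahat, auto simp: Ahat_idx symA mult.commute)
  have rowsAh: "\<forall>k<n. (\<Sum>l<n. Ahat $$ (k,l)) = d $ k"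
  proof (intro allI impI)
    fix k assume k: "k < n"
    have "(\<Sum>l<n. Ahat $$ (k,l)) = (\<Sum>l<n. A $$ (k,l)) + a * v $ k * (\<Sum>l<n. v $ l)"
      using k by (simp add: Ahat_idx sum.distrib sum_distrib_left mult.assoc)
    thus "(\<Sum>l<n. Ahat $$ (k,l)) = d $ k" using vsum d_idx k by simp
  qed
  define E where "E = delete_edge A i j"
  have E_dim: "dim_row E = n" unfolding E_def delete_edge_def using A by simp
  have E_idx: "\<And>k l. k < n \<Longrightarrow> l < n \<Longrightarrow> E $$ (k,l) = (if (k = i \<and> l = j) \<or> (k = j \<and> l = i) then 0 else A $$ (k,l))"
    unfolding E_def delete_edge_def using A by simp
  have Enn: "\<forall>k<n. \<forall>l<n. E $$ (k,l) \<ge> 0" using A_nonneg by (simp add: E_idx)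
  have Econn: "graph_connected E" using noncut unfolding is_cut_edge_def E_def by simp
  have AhE: "\<forall>k<n. \<forall>l<n. k \<noteq> l \<longrightarrow> Ahat $$ (k,l) = E $$ (k,l)"
    using ij symA[of i j] by (auto simp: Ahat_idx E_idx v_idx a_def)
  have AA: "\<forall>k<n. \<forall>l<n. k \<noteq> l \<longrightarrow> A $$ (k,l) = A $$ (k,l)" by simp
  have S_pd: "sym_pos_def S"
    unfolding S_def D_def using pd_gen[OF A A_sym dA n dpos rowsA _ A_nonneg conn AA] A by simp
  have Sh_pd: "sym_pos_def Sh"
    unfolding Sh_def D_def using pd_gen[OF Ahat Ahat_sym dA n dpos rowsAh E_dim Enn Econn AhE] .
  have D: "D \<in> carrier_mat n n" unfolding D_def using dA by (metis diag_of_carrier)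
  have S: "S \<in> carrier_mat n n" unfolding S_def using D A dA by auto
  have Sh: "Sh \<in> carrier_mat n n" unfolding Sh_def using D Ahat dA by auto
  have S_idx: "\<And>k l. k < n \<Longrightarrow> l < n \<Longrightarrow> S $$ (k,l) = (if k = l then d $ k else 0) - A $$ (k,l) + (1 / norm1 d) * (d $ k * d $ l)"
    unfolding S_def D_def using A dA by simp
  have Sh_idx: "\<And>k l. k < n \<Longrightarrow> l < n \<Longrightarrow> Sh $$ (k,l) = S $$ (k,l) - a * (v $ k * v $ l)"
    unfolding Sh_def D_def using A Ahat dA by (simp add: S_idx Ahat_idx)
  have ST: "S\<^sup>T = S" using S_pd unfolding sym_pos_def_def by simp
  have pdS: "\<And>y. y \<in> carrier_vec n \<Longrightarrow> y \<noteq> 0\<^sub>v n \<Longrightarrow> y \<bullet> (S *\<^sub>v y) > 0"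
    using S_pd S unfolding sym_pos_def_def by auto
  have pdSh: "\<And>y. y \<in> carrier_vec n \<Longrightarrow> y \<noteq> 0\<^sub>v n \<Longrightarrow> y \<bullet> (Sh *\<^sub>v y) > 0"
    using Sh_pd Sh unfolding sym_pos_def_def by auto
  have detS: "det S \<noteq> 0"
  proof
    assume "det S = 0"
    then obtain y where y: "y \<in> carrier_vec n" "y \<noteq> 0\<^sub>v n" "S *\<^sub>v y = 0\<^sub>v n"
      using det_0_iff_vec_prod_zero_field[OF S] by blast
    have "y \<bullet> (S *\<^sub>v y) = 0" using y by simp
    with pdS[OF y(1,2)] show False by simp
  qed
  obtain Sinv where inv: "mat_inverse S = Some Sinv"
  proof (cases "mat_inverse S")
    case None
    from mat_inverse(1)[OF S None, of "()"] det_non_zero_imp_unit[OF S detS, of "()"]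
    show ?thesis by simp
  next
    case (Some B) then show ?thesis using that by simp
  qed
  from mat_inverse(2)[OF S inv] have SSinv: "S * Sinv = 1\<^sub>m n" and SinvS: "Sinv * S = 1\<^sub>m n"
    and Sinv: "Sinv \<in> carrier_mat n n" by auto
  have x_def': "x = Sinv *\<^sub>v v" unfolding x_def inv by simp
  have x: "x \<in> carrier_vec n" unfolding x_def' using Sinv v by simp
  have Sx: "S *\<^sub>v x = v"
    unfolding x_def' using assoc_mult_mat_vec[OF S Sinv v, symmetric] SSinv v by simp
  have vi: "v $ i = 1" using v_idx ij by simp
  have x0: "x \<noteq> 0\<^sub>v n"
  proof
    assume "x = 0\<^sub>v n"
    have "(S *\<^sub>v x) $ i = row S i \<bullet> x" using S ij by simp
    also have "\<dots> = 0" using \<open>x = 0\<^sub>v n\<close> S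
      by (metis carrier_matD(2) row_carrier scalar_prod_right_zero)
    finally have "v $ i = 0" using Sx by simp
    thus False using vi by simp
  qed
  have vx: "(\<Sum>m<n. x $ m * v $ m) = x $ i - x $ j"
  proof -
    have "(\<Sum>m<n. x $ m * v $ m) = (\<Sum>m<n. (if m = i then x $ m else 0) - (if m = j then x $ m else 0))"
      by (rule sum.cong[OF refl]) (simp add: v_idx)
    also have "\<dots> = x $ i - x $ j" using ij by (simp add: sum_subtractf)
    finally show ?thesis .
  qed
  have xSx: "x \<bullet> (S *\<^sub>v x) = x $ i - x $ j"
    unfolding Sx using vx x v by (simp add: scalar_prod_def atLeast0LessThan)
  have xShx: "x \<bullet> (Sh *\<^sub>v x) = x \<bullet> (S *\<^sub>v x) - a * (x $ i - x $ j)^2"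
  proof -
    have "x \<bullet> (Sh *\<^sub>v x) = (\<Sum>k<n. \<Sum>l<n. x $ k * S $$ (k,l) * x $ l - a * ((x $ k * v $ k) * (x $ l * v $ l)))"
      unfolding bil[OF Sh x x] by (intro sum.cong refl) (simp add: Sh_idx algebra_simps)
    also have "\<dots> = (\<Sum>k<n. \<Sum>l<n. x $ k * S $$ (k,l) * x $ l) - a * ((\<Sum>k<n. x $ k * v $ k) * (\<Sum>l<n. x $ l * v $ l))"
      using double_sum_prod[of a "\<lambda>k. x $ k * v $ k" n] by (simp add: sum_subtractf)
    finally show ?thesis unfolding bil[OF S x x] vx power2_eq_square by simp
  qed
  have \<alpha>1: "\<alpha> \<noteq> 1"
  proof
    assume "\<alpha> = 1"
    have "x \<bullet> (Sh *\<^sub>v x) = (x $ i - x $ j) * (1 - \<alpha>)"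
      unfolding xShx xSx \<alpha>_def by (simp add: power2_eq_square algebra_simps)
    hence "x \<bullet> (Sh *\<^sub>v x) = 0" using \<open>\<alpha> = 1\<close> by simp
    with pdSh[OF x x0] show False by simp
  qed
  define c where "c = a / (1 - \<alpha>)"
  have c\<alpha>: "c * (1 - \<alpha>) = a" unfolding c_def using \<alpha>1 by simp
  define Shinv where "Shinv = Sinv + c \<cdot>\<^sub>m outer x x"
  have Shinv: "Shinv \<in> carrier_mat n n" unfolding Shinv_def using Sinv x by auto
  have Shinv_idx: "\<And>k l. k < n \<Longrightarrow> l < n \<Longrightarrow> Shinv $$ (k,l) = Sinv $$ (k,l) + c * (x $ k * x $ l)"
    unfolding Shinv_def using Sinv x by simp
  have f1: "\<And>k l. k < n \<Longrightarrow> l < n \<Longrightarrow> (\<Sum>m<n. Sinv $$ (k,m) * S $$ (m,l)) = (if k = l then 1 else 0)"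
  proof -
    fix k l assume k: "k < n" and l: "l < n"
    have "(Sinv * S) $$ (k,l) = (\<Sum>m<n. Sinv $$ (k,m) * S $$ (m,l))"
      using Sinv S k l by (simp add: scalar_prod_def row_def col_def atLeast0LessThan)
    thus "(\<Sum>m<n. Sinv $$ (k,m) * S $$ (m,l)) = (if k = l then 1 else 0)" using SinvS k l by simp
  qed
  have f2: "\<And>k. k < n \<Longrightarrow> (\<Sum>m<n. Sinv $$ (k,m) * v $ m) = x $ k"
    unfolding x_def' using Sinv v by (simp add: mult_mat_vec_def scalar_prod_def row_def atLeast0LessThan)
  have f3: "\<And>l. l < n \<Longrightarrow> (\<Sum>m<n. x $ m * S $$ (m,l)) = v $ l"
  proof -
    fix l assume l: "l < n"
    have "(\<Sum>m<n. x $ m * S $$ (m,l)) = (\<Sum>m<n. S $$ (l,m) * x $ m)"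
      using ST S l by (intro sum.cong refl) (metis carrier_matD index_transpose_mat(1) lessThan_iff mult.commute)
    also have "\<dots> = (S *\<^sub>v x) $ l" using S x l by (simp add: mult_mat_vec_def scalar_prod_def row_def atLeast0LessThan)
    finally show "(\<Sum>m<n. x $ m * S $$ (m,l)) = v $ l" using Sx by simp
  qed
  have ShSh: "Shinv * Sh = 1\<^sub>m n"
  proof (rule eq_matI)
    fix k l assume "k < dim_row (1\<^sub>m n :: real mat)" "l < dim_col (1\<^sub>m n :: real mat)"
    hence k: "k < n" and l: "l < n" by auto
    have "(Shinv * Sh) $$ (k,l) = (\<Sum>m<n. Shinv $$ (k,m) * Sh $$ (m,l))"
      using Shinv Sh k l by (simp add: scalar_prod_def row_def col_def atLeast0LessThan)
    also have "\<dots> = (\<Sum>m<n. Sinv $$ (k,m) * S $$ (m,l) - a * v $ l * (Sinv $$ (k,m) * v $ m)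
          + c * x $ k * (x $ m * S $$ (m,l)) - c * a * x $ k * v $ l * (x $ m * v $ m))"
      using k l by (intro sum.cong refl) (simp add: Shinv_idx Sh_idx algebra_simps)
    also have "\<dots> = (\<Sum>m<n. Sinv $$ (k,m) * S $$ (m,l)) - a * v $ l * (\<Sum>m<n. Sinv $$ (k,m) * v $ m)
          + c * x $ k * (\<Sum>m<n. x $ m * S $$ (m,l)) - c * a * x $ k * v $ l * (\<Sum>m<n. x $ m * v $ m)"
      by (simp add: sum.distrib sum_subtractf sum_distrib_left)
    also have "\<dots> = (if k = l then 1 else 0) + x $ k * v $ l * (c * (1 - \<alpha>) - a)"
      unfolding f1[OF k l] f2[OF k] f3[OF l] vx \<alpha>_def by (simp add: algebra_simps)
    also have "\<dots> = 1\<^sub>m n $$ (k,l)" using c\<alpha> k l by simp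
    finally show "(Shinv * Sh) $$ (k,l) = 1\<^sub>m n $$ (k,l)" .
  qed (use Shinv Sh in auto)
  have K1: "kemeny (Dinv * A) = complex_of_real (tr (Sinv * D) - 1)"
    unfolding Dinv_def D_def
    by (rule kem_real[OF A n dA dpos rowsA Sinv], use SinvS in \<open>simp add: S_def D_def\<close>)
  have K2: "kemeny (Dinv * Ahat) = complex_of_real (tr (Shinv * D) - 1)"
    unfolding Dinv_def D_def
    by (rule kem_real[OF Ahat n dA dpos rowsAh Shinv], use ShSh in \<open>simp add: Sh_def D_def\<close>)
  have trdiff: "tr (Shinv * D) = tr (Sinv * D) + c * (\<Sum>k<n. x $ k * d $ k * x $ k)"
  proof -
    have "tr (Shinv * D) = (\<Sum>k<n. Shinv $$ (k,k) * d $ k)"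
      unfolding D_def by (rule tr_mult_diag[OF Shinv dA])
    also have "\<dots> = (\<Sum>k<n. Sinv $$ (k,k) * d $ k) + c * (\<Sum>k<n. x $ k * d $ k * x $ k)"
      by (simp add: Shinv_idx sum.distrib sum_distrib_left algebra_simps)
    also have "(\<Sum>k<n. Sinv $$ (k,k) * d $ k) = tr (Sinv * D)"
      unfolding D_def by (rule tr_mult_diag[OF Sinv dA, symmetric])
    finally show ?thesis .
  qed
  have xDx: "x \<bullet> (D *\<^sub>v x) = (\<Sum>k<n. x $ k * d $ k * x $ k)"
  proof -
    have "x \<bullet> (D *\<^sub>v x) = (\<Sum>k<n. \<Sum>l<n. x $ k * D $$ (k,l) * x $ l)" by (rule bil[OF D x x])
    also have "\<dots> = (\<Sum>k<n. \<Sum>l<n. if l = k then x $ k * d $ k * x $ k else 0)"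
      unfolding D_def using dA by (intro sum.cong refl) auto
    finally show ?thesis by simp
  qed
  have main: "sym_pos_def S \<and> \<alpha> \<noteq> 1 \<and> kemeny (Dinv * Ahat) - kemeny (Dinv * A) = complex_of_real (\<beta> / (1 - \<alpha>))"
  proof (intro conjI)
    show "kemeny (Dinv * Ahat) - kemeny (Dinv * A) = complex_of_real (\<beta> / (1 - \<alpha>))"
      unfolding K1 K2 trdiff \<beta>_def xDx c_def by (simp add: field_simps)
  qed (use S_pd \<alpha>1 in auto)
  show ?thesis
    using main unfolding Let_def d_def[symmetric] D_def[symmetric] Dinv_def[symmetric] v_def[symmetric]
      a_def[symmetric] Ahat_def[symmetric] S_def[symmetric] x_def[symmetric] \<alpha>_def[symmetric] \<beta>_def[symmetric] .
qed

end
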